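(* Let $\mathcal{M}_i=(E_i,\rho_i)$, $i=1,2$, be $q$-matroids, $E=E_1\oplus E_2$ with projections $\pi_i:E\to E_i$, $\rho'_i(V)=\rho_i(\pi_i(V))$ for $V\le E$, and let $\rho$ be the rank function of $\mathcal{M}_1\oplus\mathcal{M}_2$. Define $\mathcal{X}=\{X\le E\mid \rho'_1(X)+\rho'_2(X)<\dim X\}$, $\mathcal{T}=\{X_1\oplus X_2\mid X_i\le E_i\}$, and for $V\le E$, $\mathcal{T}(V)=\{X_1\oplus X_2\mid X_i\le\pi_i(V)\}$. Then for every $V\le E$, \[ \rho(V)=\dim V+\min_{X\in\{0\}\cup\{X\in\mathcal{X}: X\le V\}}\big(\rho'_1(X)+\rho'_2(X)-\dim X\big) =\dim V+\min_{X\in\mathcal{T}}\big(\rho'_1(X)+\rho'_2(X)-\dim(X\cap V)\big) =\dim V+\min_{X\in\mathcal{T}(V)}\big(\rho'_1(X)+\rho'_2(X)-\dim(X\cap V)\big). \] As a consequence, $V$ is independent in $\mathcal{M}_1\oplus\mathcal{M}_2$ if and only if no subspace of $V$ lies in $\mathcal{X}$.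
   Context: Let $\mathbb{F}=\mathbb{F}_q$. A $q$-matroid is $\mathcal{M}=(E,\rho)$, $E$ a finite-dimensional $\mathbb{F}$-vector space, $\rho$ from subspaces to $\mathbb{Z}_{\ge0}$ with $0\le\rho(V)\le\dim V$, monotone and submodular; $V$ is independent if $\rho(V)=\dim V$. The direct sum $\mathcal{M}_1\oplus\mathcal{M}_2=(E,\rho)$ on $E=E_1\oplus E_2$ (each $E_i$ identified with its image) is defined by $\rho(V)=\dim V+\min_{X\le V}(\rho_1(\pi_1(X))+\rho_2(\pi_2(X))-\dim X)$. *)

theory Defs
  imports Complex_Main "HOL-Library.Product_Plus"
begin

text \<open>A q-matroid on the (finite-dimensional) F-vector space given by scalar
multiplication s (the ground space E is the whole carrier type).
The rank function is only constrained on subspaces.\<close>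
definition qmatroid :: "('f::field \<Rightarrow> 'v::ab_group_add \<Rightarrow> 'v) \<Rightarrow> ('v set \<Rightarrow> nat) \<Rightarrow> bool" where
  "qmatroid s r \<longleftrightarrow>
     (\<forall>V. module.subspace s V \<longrightarrow> r V \<le> vector_space.dim s V) \<and>
     (\<forall>V W. module.subspace s V \<and> module.subspace s W \<and> V \<subseteq> W \<longrightarrow> r V \<le> r W) \<and>
     (\<forall>V W. module.subspace s V \<and> module.subspace s W \<longrightarrow>
        r (module.span s (V \<union> W)) + r (V \<inter> W) \<le> r V + r W)"

definition prod_scale :: "('f \<Rightarrow> 'a \<Rightarrow> 'a) \<Rightarrow> ('f \<Rightarrow> 'b \<Rightarrow> 'b) \<Rightarrow> 'f \<Rightarrow> 'a \<times> 'b \<Rightarrow> 'a \<times> 'b" where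
  "prod_scale s1 s2 c p = (s1 c (fst p), s2 c (snd p))"

definition ds_val :: "('f::field \<Rightarrow> 'a::ab_group_add \<Rightarrow> 'a) \<Rightarrow> ('f \<Rightarrow> 'b::ab_group_add \<Rightarrow> 'b)
    \<Rightarrow> ('a set \<Rightarrow> nat) \<Rightarrow> ('b set \<Rightarrow> nat) \<Rightarrow> ('a \<times> 'b) set \<Rightarrow> ('a \<times> 'b) set \<Rightarrow> int" where
  "ds_val s1 s2 r1 r2 X Y =
     int (r1 (fst ` X)) + int (r2 (snd ` X)) - int (vector_space.dim (prod_scale s1 s2) Y)"

definition ds_rank :: "('f::field \<Rightarrow> 'a::ab_group_add \<Rightarrow> 'a) \<Rightarrow> ('f \<Rightarrow> 'b::ab_group_add \<Rightarrow> 'b)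
    \<Rightarrow> ('a set \<Rightarrow> nat) \<Rightarrow> ('b set \<Rightarrow> nat) \<Rightarrow> ('a \<times> 'b) set \<Rightarrow> int" where
  "ds_rank s1 s2 r1 r2 V =
     int (vector_space.dim (prod_scale s1 s2) V) +
     Min ((\<lambda>X. ds_val s1 s2 r1 r2 X X) ` {X. module.subspace (prod_scale s1 s2) X \<and> X \<subseteq> V})"

definition ds_X :: "('f::field \<Rightarrow> 'a::ab_group_add \<Rightarrow> 'a) \<Rightarrow> ('f \<Rightarrow> 'b::ab_group_add \<Rightarrow> 'b)
    \<Rightarrow> ('a set \<Rightarrow> nat) \<Rightarrow> ('b set \<Rightarrow> nat) \<Rightarrow> ('a \<times> 'b) set set" where
  "ds_X s1 s2 r1 r2 = {X. module.subspace (prod_scale s1 s2) X \<and>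
      r1 (fst ` X) + r2 (snd ` X) < vector_space.dim (prod_scale s1 s2) X}"

definition ds_T :: "('f::field \<Rightarrow> 'a::ab_group_add \<Rightarrow> 'a) \<Rightarrow> ('f \<Rightarrow> 'b::ab_group_add \<Rightarrow> 'b)
    \<Rightarrow> ('a \<times> 'b) set set" where
  "ds_T s1 s2 = {X1 \<times> X2 | X1 X2. module.subspace s1 X1 \<and> module.subspace s2 X2}"

definition ds_TV :: "('f::field \<Rightarrow> 'a::ab_group_add \<Rightarrow> 'a) \<Rightarrow> ('f \<Rightarrow> 'b::ab_group_add \<Rightarrow> 'b)
    \<Rightarrow> ('a \<times> 'b) set \<Rightarrow> ('a \<times> 'b) set set" where
  "ds_TV s1 s2 V = {X1 \<times> X2 | X1 X2. module.subspace s1 X1 \<and> X1 \<subseteq> fst ` V \<and>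
                                    module.subspace s2 X2 \<and> X2 \<subseteq> snd ` V}"

end

theory Submission
  imports Defs
begin

lemma vs_prod:
  assumes "vector_space s1" "vector_space s2"
  shows "vector_space (prod_scale s1 s2)"
  using assms unfolding vector_space_def prod_scale_def by (auto simp: prod_eq_iff)

lemma finite_UNIV_fdvs:
  fixes s :: "'f::{field,finite} \<Rightarrow> 'a::ab_group_add \<Rightarrow> 'a"
  assumes "finite_dimensional_vector_space s B"
  shows "finite (UNIV::'a set)"
proof -
  interpret finite_dimensional_vector_space s B by fact
  have "finite (span S)" if "finite S" for S using that
  proof induct
    case empty show ?case by simp
  next
    case (insert x S)
    have "span (insert x S) \<subseteq> (\<lambda>(k,y). y + s k x) ` (UNIV \<times> span S)"
    proof
      fix z assume "z \<in> span (insert x S)"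
      then obtain k where "z - s k x \<in> span S" by (auto simp: span_insert)
      then show "z \<in> (\<lambda>(k,y). y + s k x) ` (UNIV \<times> span S)"
      proof -
        have "z = (\<lambda>(k,y). y + s k x) (k, z - s k x)" by simp
        then show ?thesis using \<open>z - s k x \<in> span S\<close> by blast
      qed
    qed
    then show ?case using insert by (meson finite_SigmaI finite_UNIV finite_imageI finite_subset)
  qed
  then show ?thesis using span_Basis finite_Basis by metis
qed

theorem proposition5p4:
  fixes s1 :: "'f::{field,finite} \<Rightarrow> 'a::ab_group_add \<Rightarrow> 'a"
    and s2 :: "'f \<Rightarrow> 'b::ab_group_add \<Rightarrow> 'b"
    and B1 :: "'a set" and B2 :: "'b set"
    and r1 :: "'a set \<Rightarrow> nat" and r2 :: "'b set \<Rightarrow> nat"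
  assumes "finite_dimensional_vector_space s1 B1"
    and "finite_dimensional_vector_space s2 B2"
    and "qmatroid s1 r1" and "qmatroid s2 r2"
  shows "\<forall>V. module.subspace (prod_scale s1 s2) V \<longrightarrow>
     ds_rank s1 s2 r1 r2 V =
       int (vector_space.dim (prod_scale s1 s2) V) +
       Min ((\<lambda>X. ds_val s1 s2 r1 r2 X X) `
              ({{0}} \<union> {X \<in> ds_X s1 s2 r1 r2. X \<subseteq> V})) \<and>
     ds_rank s1 s2 r1 r2 V =
       int (vector_space.dim (prod_scale s1 s2) V) +
       Min ((\<lambda>X. ds_val s1 s2 r1 r2 X (X \<inter> V)) ` ds_T s1 s2) \<and>
     ds_rank s1 s2 r1 r2 V =
       int (vector_space.dim (prod_scale s1 s2) V) +
       Min ((\<lambda>X. ds_val s1 s2 r1 r2 X (X \<inter> V)) ` ds_TV s1 s2 V) \<and>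
     (ds_rank s1 s2 r1 r2 V = int (vector_space.dim (prod_scale s1 s2) V) \<longleftrightarrow>
       \<not> (\<exists>X. X \<subseteq> V \<and> X \<in> ds_X s1 s2 r1 r2))"
proof -
  interpret V1: finite_dimensional_vector_space s1 B1 by fact
  interpret V2: finite_dimensional_vector_space s2 B2 by fact
  have vs: "vector_space (prod_scale s1 s2)"
    using vs_prod V1.vector_space_axioms V2.vector_space_axioms by blast
  interpret P: vector_space "prod_scale s1 s2" by (rule vs)
  have finA: "finite (UNIV::'a set)" by (rule finite_UNIV_fdvs[OF assms(1)])
  have finB: "finite (UNIV::'b set)" by (rule finite_UNIV_fdvs[OF assms(2)])
  have finU: "finite (UNIV::('a \<times> 'b) set)" using finA finB by (simp add: finite_Prod_UNIV)
  have finUU: "finite (S :: ('a \<times> 'b) set set)" for S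
  proof -
    have "finite (Pow (UNIV::('a \<times> 'b) set))" using finU by (simp only: finite_Pow_iff)
    then show ?thesis by (rule finite_subset[rotated]) auto
  qed
  obtain B where B: "P.independent B" "UNIV \<subseteq> P.span B"
    using P.basis_exists[of UNIV] by blast
  interpret PF: finite_dimensional_vector_space "prod_scale s1 s2" B
    using B finU by unfold_locales (auto intro: finite_subset)
  have q1: "\<And>V. V1.subspace V \<Longrightarrow> r1 V \<le> V1.dim V"
    "\<And>V W. V1.subspace V \<Longrightarrow> V1.subspace W \<Longrightarrow> V \<subseteq> W \<Longrightarrow> r1 V \<le> r1 W"
    using assms(3) unfolding qmatroid_def by blast+
  have q2: "\<And>V. V2.subspace V \<Longrightarrow> r2 V \<le> V2.dim V"
    "\<And>V W. V2.subspace V \<Longrightarrow> V2.subspace W \<Longrightarrow> V \<subseteq> W \<Longrightarrow> r2 V \<le> r2 W"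
    using assms(4) unfolding qmatroid_def by blast+
  have r10: "r1 {0} = 0" using q1(1)[of "{0}"] by simp
  have r20: "r2 {0} = 0" using q2(1)[of "{0}"] by simp
  have sub_fst: "V1.subspace (fst ` X)" if "P.subspace X" for X
    unfolding V1.subspace_def
  proof (intro conjI ballI allI)
    show "0 \<in> fst ` X" using P.subspace_0[OF that] by force
    fix x y assume "x \<in> fst ` X" "y \<in> fst ` X"
    then obtain a b where "a \<in> X" "b \<in> X" "x = fst a" "y = fst b" by auto
    then show "x + y \<in> fst ` X" using P.subspace_add[OF that, of a b] by force
  next
    fix c x assume "x \<in> fst ` X"
    then obtain a where "a \<in> X" "x = fst a" by auto
    then show "s1 c x \<in> fst ` X" using P.subspace_scale[OF that, of a c]
      by (force simp: prod_scale_def)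
  qed
  have sub_snd: "V2.subspace (snd ` X)" if "P.subspace X" for X
    unfolding V2.subspace_def
  proof (intro conjI ballI allI)
    show "0 \<in> snd ` X" using P.subspace_0[OF that] by force
    fix x y assume "x \<in> snd ` X" "y \<in> snd ` X"
    then obtain a b where "a \<in> X" "b \<in> X" "x = snd a" "y = snd b" by auto
    then show "x + y \<in> snd ` X" using P.subspace_add[OF that, of a b] by force
  next
    fix c x assume "x \<in> snd ` X"
    then obtain a where "a \<in> X" "x = snd a" by auto
    then show "s2 c x \<in> snd ` X" using P.subspace_scale[OF that, of a c]
      by (force simp: prod_scale_def)
  qed
  have sub_prod: "P.subspace (X1 \<times> X2)" if "V1.subspace X1" "V2.subspace X2" for X1 X2
    using that unfolding P.subspace_def V1.subspace_def V2.subspace_def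
    by (auto simp: prod_scale_def zero_prod_def)
  have ne: "X \<noteq> {}" if "P.subspace X" for X using P.subspace_0[OF that] by auto
  have fin: "finite (f ` S)" for f :: "('a \<times> 'b) set \<Rightarrow> int" and S
    using finUU[of S] by simp
  show ?thesis
  proof (intro allI impI)
    fix V assume V: "P.subspace V"
    define F where "F = (\<lambda>X. ds_val s1 s2 r1 r2 X X)"
    define G where "G = (\<lambda>X. ds_val s1 s2 r1 r2 X (X \<inter> V))"
    define S0 where "S0 = {X. P.subspace X \<and> X \<subseteq> V}"
    define S1 where "S1 = {{0}} \<union> {X \<in> ds_X s1 s2 r1 r2. X \<subseteq> V}"
    have rk: "ds_rank s1 s2 r1 r2 V = int (P.dim V) + Min (F ` S0)"
      unfolding ds_rank_def F_def S0_def by simp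
    have F0: "F {0} = 0" unfolding F_def ds_val_def using r10 r20 by (simp add: zero_prod_def)
    have S10: "S1 \<subseteq> S0" unfolding S1_def S0_def ds_X_def
      using V P.subspace_0[OF V] by auto
    have S1ne: "{0} \<in> S1" unfolding S1_def by simp
    have neg: "F X < 0 \<longleftrightarrow> X \<in> ds_X s1 s2 r1 r2" if "P.subspace X" for X
      using that unfolding F_def ds_val_def ds_X_def by auto
    have m1: "Min (F ` S0) = Min (F ` S1)"
    proof (rule antisym)
      show "Min (F ` S0) \<le> Min (F ` S1)"
        by (rule Min_antimono) (use S10 S1ne fin in auto)
      have "Min (F ` S0) \<in> F ` S0" by (rule Min_in) (use S10 S1ne fin in auto)
      then obtain X where X: "X \<in> S0" "Min (F ` S0) = F X" by auto
      show "Min (F ` S1) \<le> Min (F ` S0)"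
      proof (cases "X \<in> ds_X s1 s2 r1 r2")
        case True
        then have "X \<in> S1" using X unfolding S1_def S0_def by auto
        then show ?thesis using X fin by (simp add: Min_le)
      next
        case False
        then have "F X \<ge> 0" using neg[of X] X unfolding S0_def by auto
        moreover have "Min (F ` S1) \<le> F {0}" using S1ne fin by (simp add: Min_le)
        ultimately show ?thesis using X F0 by simp
      qed
    qed
    have TV: "ds_TV s1 s2 V \<subseteq> ds_T s1 s2" unfolding ds_TV_def ds_T_def by auto
    have a: "Min (F ` S0) \<le> G X" if XT: "X \<in> ds_T s1 s2" for X
    proof -
      obtain X1 X2 where X: "X = X1 \<times> X2" "V1.subspace X1" "V2.subspace X2"
        using XT unfolding ds_T_def by auto
      define Y where "Y = X \<inter> V"
      have Ysub: "P.subspace Y" unfolding Y_def using sub_prod[OF X(2,3)] V X(1)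
        by (simp add: P.subspace_inter)
      have Y: "Y \<in> S0" using Ysub unfolding S0_def Y_def by auto
      have "fst ` Y \<subseteq> X1" "snd ` Y \<subseteq> X2" unfolding Y_def X(1) by auto
      then have "r1 (fst ` Y) \<le> r1 X1" "r2 (snd ` Y) \<le> r2 X2"
        using q1(2) q2(2) sub_fst sub_snd Ysub X by auto
      moreover have "fst ` X = X1" "snd ` X = X2" using X ne[OF sub_prod[OF X(2,3)]]
        by auto
      ultimately have "F Y \<le> G X" unfolding F_def G_def ds_val_def Y_def by simp
      moreover have "Min (F ` S0) \<le> F Y" using Y fin by (simp add: Min_le)
      ultimately show ?thesis by simp
    qed
    have b: "\<exists>X \<in> ds_TV s1 s2 V. G X \<le> Min (F ` S0)"
    proof -
      have "Min (F ` S0) \<in> F ` S0" by (rule Min_in) (use S10 S1ne fin in auto)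
      then obtain Y where Y: "Y \<in> S0" "Min (F ` S0) = F Y" by auto
      have Ysub: "P.subspace Y" "Y \<subseteq> V" using Y unfolding S0_def by auto
      define X where "X = fst ` Y \<times> snd ` Y"
      have XT: "X \<in> ds_TV s1 s2 V" unfolding X_def ds_TV_def
        using sub_fst sub_snd Ysub by blast
      have "fst ` X = fst ` Y" "snd ` X = snd ` Y" unfolding X_def using ne[OF Ysub(1)] by auto
      moreover have "Y \<subseteq> X \<inter> V" unfolding X_def using Ysub by force
      then have "P.dim Y \<le> P.dim (X \<inter> V)" by (rule PF.dim_subset)
      ultimately have "G X \<le> F Y" unfolding F_def G_def ds_val_def by simp
      then show ?thesis using XT Y by auto
    qed
    have m2: "Min (G ` ds_T s1 s2) = Min (F ` S0)" and m3: "Min (G ` ds_TV s1 s2 V) = Min (F ` S0)"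
    proof -
      obtain X where X: "X \<in> ds_TV s1 s2 V" "G X \<le> Min (F ` S0)" using b by blast
      have "Min (G ` ds_T s1 s2) \<le> Min (G ` ds_TV s1 s2 V)"
        by (rule Min_antimono) (use TV X fin in auto)
      moreover have "Min (G ` ds_TV s1 s2 V) \<le> G X" using X fin by (simp add: Min_le)
      moreover have "Min (G ` ds_T s1 s2) \<in> G ` ds_T s1 s2"
        by (rule Min_in) (use TV X fin in auto)
      then have "Min (F ` S0) \<le> Min (G ` ds_T s1 s2)" using a by auto
      ultimately show "Min (G ` ds_T s1 s2) = Min (F ` S0)"
        "Min (G ` ds_TV s1 s2 V) = Min (F ` S0)" using X by auto
    qed
    have m4: "Min (F ` S1) = 0 \<longleftrightarrow> \<not> (\<exists>X. X \<subseteq> V \<and> X \<in> ds_X s1 s2 r1 r2)"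
    proof
      assume h: "Min (F ` S1) = 0"
      show "\<not> (\<exists>X. X \<subseteq> V \<and> X \<in> ds_X s1 s2 r1 r2)"
      proof
        assume "\<exists>X. X \<subseteq> V \<and> X \<in> ds_X s1 s2 r1 r2"
        then obtain X where X: "X \<subseteq> V" "X \<in> ds_X s1 s2 r1 r2" by auto
        then have "X \<in> S1" unfolding S1_def by auto
        then have "Min (F ` S1) \<le> F X" using fin by (simp add: Min_le)
        moreover have "F X < 0" using neg[of X] X unfolding ds_X_def by auto
        ultimately show False using h by simp
      qed
    next
      assume "\<not> (\<exists>X. X \<subseteq> V \<and> X \<in> ds_X s1 s2 r1 r2)"
      then have "S1 = {{0}}" unfolding S1_def by auto
      then show "Min (F ` S1) = 0" using F0 by simp
    qed
    show "ds_rank s1 s2 r1 r2 V =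
       int (vector_space.dim (prod_scale s1 s2) V) +
       Min ((\<lambda>X. ds_val s1 s2 r1 r2 X X) `
              ({{0}} \<union> {X \<in> ds_X s1 s2 r1 r2. X \<subseteq> V})) \<and>
     ds_rank s1 s2 r1 r2 V =
       int (vector_space.dim (prod_scale s1 s2) V) +
       Min ((\<lambda>X. ds_val s1 s2 r1 r2 X (X \<inter> V)) ` ds_T s1 s2) \<and>
     ds_rank s1 s2 r1 r2 V =
       int (vector_space.dim (prod_scale s1 s2) V) +
       Min ((\<lambda>X. ds_val s1 s2 r1 r2 X (X \<inter> V)) ` ds_TV s1 s2 V) \<and>
     (ds_rank s1 s2 r1 r2 V = int (vector_space.dim (prod_scale s1 s2) V) \<longleftrightarrow>
       \<not> (\<exists>X. X \<subseteq> V \<and> X \<in> ds_X s1 s2 r1 r2))"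
      using rk m1 m2 m3 m4 unfolding F_def[symmetric] G_def[symmetric] S1_def[symmetric]
      by simp
  qed
qed

end
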